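(* The plane cannot be tiled by copies of the tooth alone, where the tooth is the $9$-omino consisting of a central unit square together with two unit squares extending in a straight line from it in each of the four directions (up, down, left, right).
   Context: The tooth is the plus-shaped $9$-omino: with centre square $[0,1]\times[0,1]$, it consists of the squares $[i,i+1]\times[0,1]$ for $i\in\{-2,-1,0,1,2\}$ and $[0,1]\times[j,j+1]$ for $j\in\{-2,-1,1,2\}$. A tiling of the plane by copies of a polyomino is a covering of $\mathbb{R}^2$ by copies with pairwise disjoint interiors. *)

theory Defs
  imports "HOL-Analysis.Analysis"
begin

definition unit_sq :: "int \<Rightarrow> int \<Rightarrow> (real \<times> real) set" where
  "unit_sq i j = {real_of_int i .. real_of_int i + 1} \<times> {real_of_int j .. real_of_int j + 1}"

definition tooth :: "(real \<times> real) set" where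
  "tooth = (\<Union>i\<in>{-2..2}. unit_sq i 0) \<union> (\<Union>j\<in>{-2,-1,1,2}. unit_sq 0 j)"

text \<open>Isometries of the plane (distance preserving maps; these are exactly the
  rigid motions, including reflections).\<close>
definition plane_isometry :: "(real \<times> real \<Rightarrow> real \<times> real) \<Rightarrow> bool" where
  "plane_isometry f \<longleftrightarrow> (\<forall>x y. dist (f x) (f y) = dist x y)"

definition is_copy :: "(real \<times> real) set \<Rightarrow> (real \<times> real) set \<Rightarrow> bool" where
  "is_copy P A \<longleftrightarrow> (\<exists>f. plane_isometry f \<and> A = f ` P)"

definition tiles_plane :: "(real \<times> real) set \<Rightarrow> bool" where
  "tiles_plane P \<longleftrightarrow> (\<exists>\<T>. (\<forall>A\<in>\<T>. is_copy P A) \<and> \<Union>\<T> = UNIV \<and>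
      (\<forall>A\<in>\<T>. \<forall>B\<in>\<T>. A \<noteq> B \<longrightarrow> interior A \<inter> interior B = {}))"

end

theory Submission
  imports Defs
begin
lemma iso_ot:
  assumes "plane_isometry f"
  shows "orthogonal_transformation (\<lambda>x. f x - f 0)"
  unfolding orthogonal_transformation_isometry
  using assms unfolding plane_isometry_def by (simp add: dist_norm)

lemma iso_surj:
  assumes "plane_isometry f" shows "surj f"
proof -
  have "surj (\<lambda>x. f x - f 0)" using orthogonal_transformation_surj[OF iso_ot[OF assms]] .
  then show ?thesis
    by (metis (no_types, lifting) diff_add_cancel surj_def)
qed

lemma iso_inj:
  assumes "plane_isometry f" shows "inj f"
  using assms unfolding plane_isometry_def inj_def by (metis dist_eq_0_iff)

lemma iso_ball:
  assumes "plane_isometry f" shows "f ` ball x e = ball (f x) e"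
proof
  show "f ` ball x e \<subseteq> ball (f x) e" using assms unfolding plane_isometry_def
    by (metis (no_types, lifting) image_subsetI mem_ball)
  show "ball (f x) e \<subseteq> f ` ball x e"
  proof
    fix y assume "y \<in> ball (f x) e"
    obtain z where "y = f z" using iso_surj[OF assms] by (metis surjD)
    then show "y \<in> f ` ball x e" using \<open>y \<in> ball (f x) e\<close> assms
      unfolding plane_isometry_def by (metis image_eqI mem_ball)
  qed
qed

lemma iso_interior:
  assumes "plane_isometry f" "x \<in> interior A" shows "f x \<in> interior (f ` A)"
proof -
  obtain e where "e > 0" "ball x e \<subseteq> A" using assms(2) by (meson mem_interior)
  then have "ball (f x) e \<subseteq> f ` A" using iso_ball[OF assms(1)] by (metis image_mono)
  then show ?thesis using \<open>e > 0\<close> by (meson mem_interior)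
qed

lemma iso_inv:
  assumes "plane_isometry f" shows "plane_isometry (inv f)"
  unfolding plane_isometry_def
proof (intro allI)
  fix x y
  have "x = f (inv f x)" "y = f (inv f y)" using iso_surj[OF assms] by (simp_all add: surj_f_inv_f)
  then show "dist (inv f x) (inv f y) = dist x y" using assms unfolding plane_isometry_def by metis
qed

lemma iso_comp:
  assumes "plane_isometry f" "plane_isometry g" shows "plane_isometry (f \<circ> g)"
  using assms unfolding plane_isometry_def comp_def by metis

lemma iso_cont:
  assumes "plane_isometry f" shows "continuous_on S f"
proof -
  have "linear (\<lambda>x. f x - f 0)" using iso_ot[OF assms] orthogonal_transformation_linear by blast
  then have "continuous_on S (\<lambda>x. f x - f 0)" by (simp add: linear_continuous_on linear_conv_bounded_linear)
  then have "continuous_on S (\<lambda>x. (f x - f 0) + f 0)" by (rule continuous_on_add[OF _ continuous_on_const])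
  then show ?thesis by simp
qed

lemma tooth_iff: "x \<in> tooth \<longleftrightarrow>
  (0 \<le> snd x \<and> snd x \<le> 1 \<and> -2 \<le> fst x \<and> fst x \<le> 3) \<or>
  (0 \<le> fst x \<and> fst x \<le> 1 \<and> -2 \<le> snd x \<and> snd x \<le> 3)"
proof
  assume "x \<in> tooth"
  then show "(0 \<le> snd x \<and> snd x \<le> 1 \<and> -2 \<le> fst x \<and> fst x \<le> 3) \<or>
  (0 \<le> fst x \<and> fst x \<le> 1 \<and> -2 \<le> snd x \<and> snd x \<le> 3)"
    unfolding tooth_def unit_sq_def
    by (cases x) (auto simp: mem_Times_iff)
next
  assume H: "(0 \<le> snd x \<and> snd x \<le> 1 \<and> -2 \<le> fst x \<and> fst x \<le> 3) \<or>
  (0 \<le> fst x \<and> fst x \<le> 1 \<and> -2 \<le> snd x \<and> snd x \<le> 3)"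
  obtain a b where x: "x = (a,b)" by (cases x)
  show "x \<in> tooth"
  proof (cases "0 \<le> b \<and> b \<le> 1 \<and> -2 \<le> a \<and> a \<le> 3")
    case True
    define i where "i = min 2 \<lfloor>a\<rfloor>"
    have i: "i \<in> {-2..2}" "real_of_int i \<le> a" "a \<le> real_of_int i + 1"
      using True unfolding i_def by (auto simp: min_def)
    then have "x \<in> unit_sq i 0" using True x unfolding unit_sq_def by auto
    then show ?thesis using i unfolding tooth_def by blast
  next
    case False
    then have F: "0 \<le> a \<and> a \<le> 1 \<and> -2 \<le> b \<and> b \<le> 3" using H x by auto
    define j where "j = min 2 \<lfloor>b\<rfloor>"
    have j: "j \<in> {-2..2}" "real_of_int j \<le> b" "b \<le> real_of_int j + 1"
      using F unfolding j_def by (auto simp: min_def)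
    then have "x \<in> unit_sq 0 j" using F x unfolding unit_sq_def by auto
    show ?thesis
    proof (cases "j = 0")
      case True
      then show ?thesis using \<open>x \<in> unit_sq 0 j\<close> unfolding tooth_def by force
    next
      case False
      then have "j \<in> {-2,-1,1,2}" using j by auto
      then show ?thesis using \<open>x \<in> unit_sq 0 j\<close> unfolding tooth_def by blast
    qed
  qed
qed

definition openT :: "(real \<times> real) set" where
  "openT = {x. (0 < snd x \<and> snd x < 1 \<and> -2 < fst x \<and> fst x < 3) \<or>
                (0 < fst x \<and> fst x < 1 \<and> -2 < snd x \<and> snd x < 3)}"

lemma open_openT: "open openT"
proof -
  have "openT = ({-2<..<3} \<times> {0<..<1}) \<union> ({0<..<1} \<times> {-2<..<3})"
    unfolding openT_def by auto
  then show ?thesis by (metis open_Un open_Times open_greaterThanLessThan)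
qed

lemma openT_interior: "openT \<subseteq> interior tooth"
proof (rule interior_maximal[OF _ open_openT])
  show "openT \<subseteq> tooth" by (auto simp: openT_def tooth_iff)
qed

lemma compact_tooth: "compact tooth"
  unfolding tooth_def unit_sq_def
  by (intro compact_Un compact_UN) (auto intro!: compact_Times)

lemma tooth_dist: assumes "x \<in> tooth" shows "dist x (1/2,1/2) \<le> 3"
proof -
  obtain a b where x: "x = (a,b)" by (cases x)
  have sq: "t^2 \<le> r^2" if "-r \<le> t" "t \<le> r" for t r :: real
    using power_mono[of "\<bar>t\<bar>" r 2] that by simp
  have "(-5/2 \<le> a - 1/2 \<and> a - 1/2 \<le> 5/2 \<and> -1/2 \<le> b - 1/2 \<and> b - 1/2 \<le> 1/2) \<or>
        (-1/2 \<le> a - 1/2 \<and> a - 1/2 \<le> 1/2 \<and> -5/2 \<le> b - 1/2 \<and> b - 1/2 \<le> 5/2)"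
    using assms unfolding x tooth_iff by auto
  then have "(a - 1/2)^2 + (b - 1/2)^2 \<le> 9"
  proof
    assume h: "-5/2 \<le> a - 1/2 \<and> a - 1/2 \<le> 5/2 \<and> -1/2 \<le> b - 1/2 \<and> b - 1/2 \<le> 1/2"
    have "(a - 1/2)^2 \<le> (5/2)^2" using h by (intro sq) auto
    moreover have "(b - 1/2)^2 \<le> (1/2)^2" using h by (intro sq) auto
    ultimately show ?thesis by (simp add: power2_eq_square)
  next
    assume h: "-1/2 \<le> a - 1/2 \<and> a - 1/2 \<le> 1/2 \<and> -5/2 \<le> b - 1/2 \<and> b - 1/2 \<le> 5/2"
    have "(a - 1/2)^2 \<le> (1/2)^2" using h by (intro sq) auto
    moreover have "(b - 1/2)^2 \<le> (5/2)^2" using h by (intro sq) auto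
    ultimately show ?thesis by (simp add: power2_eq_square)
  qed
  then have "sqrt ((a - 1/2)^2 + (b - 1/2)^2) \<le> sqrt 9" by (rule real_sqrt_le_mono)
  then show ?thesis unfolding x dist_Pair_Pair dist_real_def by simp
qed

lemma ball_openT: "ball (1/2,1/2) (1/2) \<subseteq> openT"
proof
  fix x :: "real \<times> real" assume "x \<in> ball (1/2,1/2) (1/2)"
  then have "dist (fst x) (1/2) < 1/2" "dist (snd x) (1/2) < 1/2"
    using dist_fst_le[of x "(1/2,1/2)"] dist_snd_le[of x "(1/2,1/2)"] by (auto simp: dist_commute)
  then show "x \<in> openT" unfolding openT_def dist_real_def by auto
qed

definition tr :: "real \<times> real \<Rightarrow> (real \<times> real) set" where
  "tr c = (\<lambda>x. x + c) ` tooth"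

lemma mem_tr: "z \<in> tr c \<longleftrightarrow> z - c \<in> tooth"
  unfolding tr_def by (auto simp: image_iff) (metis diff_add_cancel)

lemma iso_trans: "plane_isometry (\<lambda>x. x + c)"
  unfolding plane_isometry_def by (simp add: dist_norm)

lemma int_tr: assumes "z - c \<in> openT" shows "z \<in> interior (tr c)"
proof -
  have "z - c \<in> interior tooth" using assms openT_interior by blast
  from iso_interior[OF iso_trans this, of c] show ?thesis unfolding tr_def by simp
qed

lemma tr_copy: "is_copy tooth (tr c)"
  unfolding is_copy_def tr_def using iso_trans by blast

lemma tr_inj: assumes "tr c = tr d" shows "c = d"
proof -
  have "(fst c - 2, snd c) \<in> tr c" "(fst c, snd c - 2) \<in> tr c"
       "(fst d - 2, snd d) \<in> tr d" "(fst d, snd d - 2) \<in> tr d"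
    by (auto simp: mem_tr tooth_iff)
  then have "(fst c - 2, snd c) \<in> tr d" "(fst c, snd c - 2) \<in> tr d"
       "(fst d - 2, snd d) \<in> tr c" "(fst d, snd d - 2) \<in> tr c"
    using assms by auto
  then have "fst c - 2 - fst d \<ge> -2" "snd c - 2 - snd d \<ge> -2"
            "fst d - 2 - fst c \<ge> -2" "snd d - 2 - snd c \<ge> -2"
    unfolding mem_tr tooth_iff by auto
  then show ?thesis by (simp add: prod_eq_iff)
qed

definition iso_of :: "(real \<times> real) set \<Rightarrow> (real \<times> real \<Rightarrow> real \<times> real)" where
  "iso_of A = (SOME f. plane_isometry f \<and> A = f ` tooth)"

lemma iso_of: assumes "is_copy tooth A" shows "plane_isometry (iso_of A)" "A = iso_of A ` tooth"
proof -
  have "\<exists>f. plane_isometry f \<and> A = f ` tooth" using assms unfolding is_copy_def .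
  from someI_ex[OF this] show "plane_isometry (iso_of A)" "A = iso_of A ` tooth"
    unfolding iso_of_def by auto
qed

definition cen :: "(real \<times> real) set \<Rightarrow> real \<times> real" where
  "cen A = iso_of A (1/2,1/2)"

lemma cen_ball: assumes "is_copy tooth A" shows "ball (cen A) (1/2) \<subseteq> interior A"
proof (rule interior_maximal)
  have "ball (1/2,1/2) (1/2) \<subseteq> tooth" using ball_openT openT_interior interior_subset by blast
  then have "iso_of A ` ball (1/2,1/2) (1/2) \<subseteq> A" using iso_of[OF assms] by blast
  then show "ball (cen A) (1/2) \<subseteq> A" unfolding cen_def iso_ball[OF iso_of(1)[OF assms]] .
qed simp

lemma cen_sep:
  assumes "is_copy tooth A" "is_copy tooth B" "interior A \<inter> interior B = {}"
  shows "1 \<le> dist (cen A) (cen B)"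
proof (rule ccontr)
  assume "\<not> 1 \<le> dist (cen A) (cen B)"
  then have d: "dist (cen A) (cen B) < 1" by simp
  define z where "z = midpoint (cen A) (cen B)"
  have "z \<in> ball (cen A) (1/2)" "z \<in> ball (cen B) (1/2)"
    using d unfolding z_def mem_ball dist_midpoint by auto
  then show False using cen_ball[OF assms(1)] cen_ball[OF assms(2)] assms(3) by blast
qed

lemma cen_near:
  assumes "is_copy tooth A" "y \<in> A" "dist y p < 1"
  shows "dist (cen A) p < 4"
proof -
  obtain x where x: "x \<in> tooth" "y = iso_of A x" using assms(2) iso_of(2)[OF assms(1)] by blast
  have "dist (cen A) y = dist (1/2,1/2) x"
    using iso_of(1)[OF assms(1)] unfolding cen_def x(2) plane_isometry_def by metis
  also have "\<dots> \<le> 3" using tooth_dist[OF x(1)] by (simp add: dist_commute)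
  finally show ?thesis using dist_triangle[of "cen A" p y] assms(3) by linarith
qed

lemma floor_bnd: "real_of_int \<lfloor>x::real\<rfloor> \<le> x" "x < real_of_int \<lfloor>x\<rfloor> + 1"
  using floor_correct[of x] by simp_all

lemma floor_close: assumes "\<lfloor>x::real\<rfloor> = \<lfloor>y\<rfloor>" shows "\<bar>x - y\<bar> < 1"
proof -
  have "real_of_int \<lfloor>x\<rfloor> = real_of_int \<lfloor>y\<rfloor>" using assms by simp
  then show ?thesis using floor_bnd[of x] floor_bnd[of y] unfolding abs_less_iff by linarith
qed

lemma floor_range: assumes "\<bar>x - y\<bar> < 8" shows "\<lfloor>x::real\<rfloor> \<in> {\<lfloor>y\<rfloor> - 9 .. \<lfloor>y\<rfloor> + 9}"
proof -
  have a: "x - y < 8" "y - x < 8" using assms unfolding abs_less_iff by auto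
  have "real_of_int \<lfloor>x\<rfloor> < real_of_int \<lfloor>y\<rfloor> + 9" "real_of_int \<lfloor>y\<rfloor> - 9 < real_of_int \<lfloor>x\<rfloor>"
    using floor_bnd[of x] floor_bnd[of y] a by linarith+
  then have "real_of_int \<lfloor>x\<rfloor> < real_of_int (\<lfloor>y\<rfloor> + 9)" "real_of_int (\<lfloor>y\<rfloor> - 9) < real_of_int \<lfloor>x\<rfloor>"
    by simp_all
  then show ?thesis by (simp only: of_int_less_iff) auto
qed

lemma dist_le_sum: "dist (x::real\<times>real) y \<le> \<bar>fst x - fst y\<bar> + \<bar>snd x - snd y\<bar>"
proof -
  have "dist x y = sqrt ((dist (fst x) (fst y))\<^sup>2 + (dist (snd x) (snd y))\<^sup>2)"
    using dist_Pair_Pair[of "fst x" "snd x" "fst y" "snd y"] by simp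
  also have "\<dots> \<le> \<bar>dist (fst x) (fst y)\<bar> + \<bar>dist (snd x) (snd y)\<bar>" by (rule sqrt_sum_squares_le_sum_abs)
  finally show ?thesis by (simp add: dist_real_def)
qed

lemma loc_fin:
  assumes cp: "\<forall>A\<in>\<T>. is_copy tooth A"
    and dj: "\<forall>A\<in>\<T>. \<forall>B\<in>\<T>. A \<noteq> B \<longrightarrow> interior A \<inter> interior B = {}"
  shows "finite {A\<in>\<T>. \<exists>y\<in>A. dist y p < 1}"
proof -
  define S where "S = {A\<in>\<T>. \<exists>y\<in>A. dist y p < 1}"
  define h where "h A = (\<lfloor>2 * fst (cen A)\<rfloor>, \<lfloor>2 * snd (cen A)\<rfloor>)" for A
  have "inj_on h S"
  proof (rule inj_onI)
    fix A B assume AB: "A \<in> S" "B \<in> S" "h A = h B"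
    show "A = B"
    proof (rule ccontr)
      assume "A \<noteq> B"
      then have "1 \<le> dist (cen A) (cen B)" using AB cp dj cen_sep unfolding S_def by auto
      moreover have "\<bar>2 * fst (cen A) - 2 * fst (cen B)\<bar> < 1" "\<bar>2 * snd (cen A) - 2 * snd (cen B)\<bar> < 1"
        using AB(3) floor_close unfolding h_def by auto
      ultimately show False using dist_le_sum[of "cen A" "cen B"] by linarith
    qed
  qed
  moreover have "h ` S \<subseteq> {\<lfloor>2 * fst p\<rfloor> - 9 .. \<lfloor>2 * fst p\<rfloor> + 9} \<times> {\<lfloor>2 * snd p\<rfloor> - 9 .. \<lfloor>2 * snd p\<rfloor> + 9}"
  proof
    fix k assume "k \<in> h ` S"
    then obtain A where A: "A \<in> S" "k = h A" by blast
    then obtain y where "y \<in> A" "dist y p < 1" "A \<in> \<T>" unfolding S_def by auto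
    then have d: "dist (cen A) p < 4" using cen_near cp by blast
    have "\<bar>2 * fst (cen A) - 2 * fst p\<bar> < 8" "\<bar>2 * snd (cen A) - 2 * snd p\<bar> < 8"
      using d dist_fst_le[of "cen A" p] dist_snd_le[of "cen A" p] by (auto simp: dist_real_def)
    then show "k \<in> {\<lfloor>2 * fst p\<rfloor> - 9 .. \<lfloor>2 * fst p\<rfloor> + 9} \<times> {\<lfloor>2 * snd p\<rfloor> - 9 .. \<lfloor>2 * snd p\<rfloor> + 9}"
      using floor_range A(2) unfolding h_def by (simp add: mem_Times_iff)
  qed
  then have "finite (h ` S)" by (rule finite_subset) simp
  ultimately show ?thesis unfolding S_def[symmetric] using finite_imageD by blast
qed

lemma normalize:
  assumes "tiles_plane tooth"
  shows "\<exists>\<T>. (\<forall>A\<in>\<T>. is_copy tooth A) \<and> \<Union>\<T> = UNIV \<and>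
      (\<forall>A\<in>\<T>. \<forall>B\<in>\<T>. A \<noteq> B \<longrightarrow> interior A \<inter> interior B = {}) \<and> tooth \<in> \<T>"
proof -
  from assms obtain \<T> where H: "(\<forall>A\<in>\<T>. is_copy tooth A) \<and> \<Union>\<T> = UNIV \<and>
      (\<forall>A\<in>\<T>. \<forall>B\<in>\<T>. A \<noteq> B \<longrightarrow> interior A \<inter> interior B = {})"
    unfolding tiles_plane_def by (rule exE)
  have cp: "\<forall>A\<in>\<T>. is_copy tooth A" using H by (rule conjunct1)
  have cv: "\<Union>\<T> = UNIV" by (fact conjunct1[OF conjunct2[OF H]])
  have dj: "\<forall>A\<in>\<T>. \<forall>B\<in>\<T>. A \<noteq> B \<longrightarrow> interior A \<inter> interior B = {}"
    by (fact conjunct2[OF conjunct2[OF H]])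
  have "(0,0) \<in> \<Union>\<T>" using cv by simp
  then obtain A0 where A0: "A0 \<in> \<T>" by blast
  obtain f0 where f0: "plane_isometry f0" "A0 = f0 ` tooth" using cp A0 unfolding is_copy_def by blast
  define g where "g = inv f0"
  have gi: "plane_isometry g" unfolding g_def using iso_inv[OF f0(1)] .
  have gf: "g (f0 x) = x" for x unfolding g_def using iso_inj[OF f0(1)] by (simp add: inv_f_f)
  have fg: "f0 (g x) = x" for x unfolding g_def using iso_surj[OF f0(1)] by (simp add: surj_f_inv_f)
  have fgid: "f0 \<circ> g = id" by (rule ext) (simp add: fg)
  have gfid: "g \<circ> f0 = id" by (rule ext) (simp add: gf)
  define \<T>' where "\<T>' = (\<lambda>A. g ` A) ` \<T>"
  have c1: "\<forall>A\<in>\<T>'. is_copy tooth A"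
  proof
    fix A' assume "A' \<in> \<T>'"
    then obtain A where A: "A \<in> \<T>" "A' = g ` A" unfolding \<T>'_def by blast
    then obtain f where f: "plane_isometry f" "A = f ` tooth" using cp unfolding is_copy_def by blast
    have "A' = (g \<circ> f) ` tooth" using A f by (simp add: image_comp)
    then show "is_copy tooth A'" unfolding is_copy_def using iso_comp[OF gi f(1)] by blast
  qed
  have c2: "\<Union>\<T>' = UNIV"
  proof -
    have "z \<in> \<Union>\<T>'" for z
    proof -
      have "f0 z \<in> \<Union>\<T>" using cv by simp
      then obtain A where "A \<in> \<T>" "f0 z \<in> A" by blast
      then have "g (f0 z) \<in> g ` A" "g ` A \<in> \<T>'" unfolding \<T>'_def by auto
      then show ?thesis by (metis UnionI gf)
    qed
    then show ?thesis by auto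
  qed
  have c3: "\<forall>A\<in>\<T>'. \<forall>B\<in>\<T>'. A \<noteq> B \<longrightarrow> interior A \<inter> interior B = {}"
  proof (intro ballI impI)
    fix A' B' assume H: "A' \<in> \<T>'" "B' \<in> \<T>'" "A' \<noteq> B'"
    then obtain A B where AB: "A \<in> \<T>" "B \<in> \<T>" "A' = g ` A" "B' = g ` B" unfolding \<T>'_def by blast
    then have "A \<noteq> B" using H by auto
    have fA: "f0 ` A' = A" "f0 ` B' = B" using AB by (simp_all add: image_comp fgid)
    show "interior A' \<inter> interior B' = {}"
    proof (rule ccontr)
      assume "interior A' \<inter> interior B' \<noteq> {}"
      then obtain z where "z \<in> interior A'" "z \<in> interior B'" by blast
      then have "f0 z \<in> interior (f0 ` A')" "f0 z \<in> interior (f0 ` B')"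
        using iso_interior[OF f0(1)] by blast+
      then have "f0 z \<in> interior A" "f0 z \<in> interior B" unfolding fA .
      then show False using dj AB \<open>A \<noteq> B\<close> by blast
    qed
  qed
  have c4: "tooth \<in> \<T>'"
  proof -
    have "g ` A0 = tooth" using f0(2) by (simp add: image_comp gfid)
    then show ?thesis using A0 unfolding \<T>'_def by blast
  qed
  show ?thesis by (intro exI[of _ "\<T>'"] conjI) (fact c1, fact c2, fact c3, fact c4)
qed

definition inW :: "real \<Rightarrow> real \<Rightarrow> real \<times> real \<Rightarrow> real \<times> real \<Rightarrow> bool" where
  "inW s1 s2 p z \<longleftrightarrow> 0 \<le> s1 * (fst z - fst p) \<and> 0 \<le> s2 * (snd z - snd p)"

definition good :: "real \<Rightarrow> real \<Rightarrow> real \<times> real \<Rightarrow> (real \<times> real) set \<Rightarrow> bool" where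
  "good s1 s2 p T \<longleftrightarrow> (\<forall>z. z \<in> interior T \<longrightarrow> dist z p < 1 \<longrightarrow> fst z \<noteq> fst p \<longrightarrow> snd z \<noteq> snd p \<longrightarrow> inW s1 s2 p z)"

lemma abs_fst_le: "\<bar>fst v\<bar> \<le> norm (v::real\<times>real)"
  using norm_fst_le[of "fst v" "snd v"] by simp

lemma abs_snd_le: "\<bar>snd v\<bar> \<le> norm (v::real\<times>real)"
  using norm_snd_le[of "snd v" "fst v"] by simp

lemma norm_le_sum: "norm (v::real\<times>real) \<le> \<bar>fst v\<bar> + \<bar>snd v\<bar>"
  using dist_le_sum[of v 0] by simp

lemma perturb:
  assumes w: "w \<in> interior T" and dw: "dist w p < 1/2"
    and viol: "s1 * (fst w - fst p) < 0 \<or> s2 * (snd w - snd p) < 0"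
    and gd: "good s1 s2 p T"
  shows False
proof -
  obtain \<epsilon> where ep: "\<epsilon> > 0" "ball w \<epsilon> \<subseteq> interior T"
    using w open_interior open_contains_ball by blast
  define \<delta> where "\<delta> = min \<epsilon> (1/4) / 4"
  have d0: "0 < \<delta>" "\<delta> < \<epsilon> / 2" "\<delta> \<le> 1/16" using ep unfolding \<delta>_def by auto
  define z where "z = (fst w + (if fst w = fst p then \<delta> else 0), snd w + (if snd w = snd p then \<delta> else 0))"
  have "\<bar>fst z - fst w\<bar> \<le> \<delta>" "\<bar>snd z - snd w\<bar> \<le> \<delta>" using d0 unfolding z_def by auto
  then have dz: "dist z w < \<epsilon>" "dist z w \<le> 1/8"
    using dist_le_sum[of z w] d0 by linarith+
  then have zi: "z \<in> interior T" using ep by (auto simp: dist_commute)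
  have dzp: "dist z p < 1" using dist_triangle[of z p w] dz dw by linarith
  have n1: "fst z \<noteq> fst p" "snd z \<noteq> snd p" using d0 unfolding z_def by auto
  have "inW s1 s2 p z" using gd zi dzp n1 unfolding good_def by blast
  moreover have "\<not> inW s1 s2 p z"
  proof
    assume "inW s1 s2 p z"
    then have a: "0 \<le> s1 * (fst z - fst p)" "0 \<le> s2 * (snd z - snd p)" unfolding inW_def by auto
    from viol show False
    proof
      assume v: "s1 * (fst w - fst p) < 0"
      then have "fst w \<noteq> fst p" by auto
      then have "fst z = fst w" unfolding z_def by simp
      then show False using a v by simp
    next
      assume v: "s2 * (snd w - snd p) < 0"
      then have "snd w \<noteq> snd p" by auto
      then have "snd z = snd w" unfolding z_def by simp
      then show False using a v by simp
    qed
  qed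
  ultimately show False by blast
qed

lemma box_interior:
  assumes "unit_sq a b \<subseteq> tooth"
    and "real_of_int a < fst y" "fst y < real_of_int a + 1" "real_of_int b < snd y" "snd y < real_of_int b + 1"
  shows "y \<in> interior tooth"
proof -
  let ?B = "{real_of_int a<..<real_of_int a + 1} \<times> {real_of_int b<..<real_of_int b + 1}"
  have "open ?B" by (simp add: open_Times)
  moreover have "?B \<subseteq> tooth" using assms(1) unfolding unit_sq_def by auto
  moreover have "y \<in> ?B" using assms(2-) by (cases y) auto
  ultimately show ?thesis using interior_maximal by blast
qed

lemma prod_facts:
  fixes A k :: real
  assumes "0 \<le> A" "A \<le> 1" "0 \<le> k" "k \<le> 1/2"
  shows "0 \<le> k * A" "k * A \<le> A / 2" "k - k * A \<le> (1 - A) / 2"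
proof -
  show "0 \<le> k * A" using assms by simp
  show "k * A \<le> A / 2" using mult_right_mono[of k "1/2" A] assms by simp
  have "k * (1 - A) \<le> (1/2) * (1 - A)" using mult_right_mono[of k "1/2" "1 - A"] assms by simp
  then show "k - k * A \<le> (1 - A) / 2" by (simp add: algebra_simps)
qed

lemma box_arith:
  fixes a u x k P :: real
  assumes "0 \<le> P" "P \<le> (u - a) / 2" "k - P \<le> (1 - (u - a)) / 2" "a \<le> u" "u \<le> a + 1"
    "a \<le> x" "x \<le> a + 1" "0 < k" "k \<le> 1/2"
  shows "a < u + (x - u + (k / 2 - P)) / 8 \<and> u + (x - u + (k / 2 - P)) / 8 < a + 1"
proof
  show "a < u + (x - u + (k / 2 - P)) / 8" using assms by argo
  show "u + (x - u + (k / 2 - P)) / 8 < a + 1" using assms by argo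
qed

lemma core:
  assumes iso: "plane_isometry f" and gd: "good s1 s2 p (f ` tooth)"
    and s: "\<bar>s1\<bar> = 1" "\<bar>s2\<bar> = 1"
    and fu: "f u = p" and cell: "unit_sq a b \<subseteq> tooth" and u: "u \<in> unit_sq a b" and x: "x \<in> unit_sq a b"
  shows "inW s1 s2 p (f x)"
proof (rule ccontr)
  assume nW: "\<not> inW s1 s2 p (f x)"
  define L where "L = (\<lambda>y. f y - f 0)"
  have ot: "orthogonal_transformation L" unfolding L_def by (rule iso_ot[OF iso])
  have lin: "linear L" using ot orthogonal_transformation_linear by blast
  have nL: "norm (L v) = norm v" for v using orthogonal_transformation_norm ot by blast
  have fL: "f y = p + L (y - u)" for y
    using linear_diff[OF lin, of y u] fu unfolding L_def by (simp add: algebra_simps)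
  define d where "d = L (x - u)"
  define m where "m = (real_of_int a + 1/2, real_of_int b + 1/2)"
  define e where "e = L (m - u)"
  have ub: "real_of_int a \<le> fst u" "fst u \<le> real_of_int a + 1" "real_of_int b \<le> snd u" "snd u \<le> real_of_int b + 1"
    using u unfolding unit_sq_def by (auto simp: mem_Times_iff)
  have xb: "real_of_int a \<le> fst x" "fst x \<le> real_of_int a + 1" "real_of_int b \<le> snd x" "snd x \<le> real_of_int b + 1"
    using x unfolding unit_sq_def by (auto simp: mem_Times_iff)
  have ne: "norm e \<le> 1"
  proof -
    have "norm (m - u) \<le> \<bar>fst (m - u)\<bar> + \<bar>snd (m - u)\<bar>" by (rule norm_le_sum)
    also have "\<dots> \<le> 1" using ub unfolding m_def by (simp add: abs_le_iff)
    finally show ?thesis unfolding e_def nL .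
  qed
  have nd: "norm d \<le> 2"
  proof -
    have "norm (x - u) \<le> \<bar>fst (x - u)\<bar> + \<bar>snd (x - u)\<bar>" by (rule norm_le_sum)
    also have "\<dots> \<le> 2" using ub xb by (simp add: abs_le_iff)
    finally show ?thesis unfolding d_def nL .
  qed
  have e1: "\<bar>fst e\<bar> \<le> 1" "\<bar>snd e\<bar> \<le> 1" using ne abs_fst_le[of e] abs_snd_le[of e] by linarith+
  have "f x - p = d" using fL[of x] unfolding d_def by simp
  then have viol: "s1 * fst d < 0 \<or> s2 * snd d < 0" using nW unfolding inW_def
    by (metis fst_diff snd_diff not_le)
  define \<mu> where "\<mu> = max (- (s1 * fst d)) (- (s2 * snd d))"
  have mu: "\<mu> > 0" using viol unfolding \<mu>_def by auto
  define \<kappa> where "\<kappa> = min (1/2) (\<mu> / 2)"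
  have k: "0 < \<kappa>" "\<kappa> \<le> 1/2" "\<kappa> \<le> \<mu> / 2" using mu unfolding \<kappa>_def by auto
  define v where "v = (x - u) + \<kappa> *\<^sub>R (m - u)"
  define y where "y = u + (1/8) *\<^sub>R v"
  have Ly: "f y - p = (1/8) *\<^sub>R (d + \<kappa> *\<^sub>R e)"
  proof -
    have "f y - p = L ((1/8) *\<^sub>R v)" using fL[of y] unfolding y_def by simp
    also have "\<dots> = (1/8) *\<^sub>R (d + \<kappa> *\<^sub>R e)"
      unfolding v_def d_def e_def using lin by (simp add: linear_add linear_scale)
    finally show ?thesis .
  qed
  have "s1 * fst (f y - p) < 0 \<or> s2 * snd (f y - p) < 0"
  proof (cases "- (s1 * fst d) \<ge> - (s2 * snd d)")
    case True
    then have m1: "\<mu> = - (s1 * fst d)" unfolding \<mu>_def by auto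
    have "s1 * fst e \<le> 1" using e1 s by (metis abs_le_D1 abs_mult mult_1)
    then have kk: "\<kappa> * (s1 * fst e) \<le> \<kappa>" using k by (simp add: mult_left_le)
    have "s1 * fst (f y - p) = (1/8) * (s1 * fst d + \<kappa> * (s1 * fst e))"
      unfolding Ly by (simp add: algebra_simps)
    moreover have "s1 * fst d + \<kappa> * (s1 * fst e) < 0"
      using k m1 mu kk by linarith
    ultimately show ?thesis by simp
  next
    case False
    then have m1: "\<mu> = - (s2 * snd d)" unfolding \<mu>_def by auto
    have "s2 * snd e \<le> 1" using e1 s by (metis abs_le_D1 abs_mult mult_1)
    then have kk: "\<kappa> * (s2 * snd e) \<le> \<kappa>" using k by (simp add: mult_left_le)
    have "s2 * snd (f y - p) = (1/8) * (s2 * snd d + \<kappa> * (s2 * snd e))"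
      unfolding Ly by (simp add: algebra_simps)
    moreover have "s2 * snd d + \<kappa> * (s2 * snd e) < 0"
      using k m1 mu kk by linarith
    ultimately show ?thesis by simp
  qed
  then have viol2: "s1 * (fst (f y) - fst p) < 0 \<or> s2 * (snd (f y) - snd p) < 0" by simp
  have dy: "dist (f y) p < 1/2"
  proof -
    have "norm (d + \<kappa> *\<^sub>R e) \<le> norm d + norm (\<kappa> *\<^sub>R e)" by (rule norm_triangle_ineq)
    also have "norm (\<kappa> *\<^sub>R e) = \<kappa> * norm e" using k by simp
    also have "\<kappa> * norm e \<le> \<kappa>" using ne k by (simp add: mult_left_le)
    finally have "norm (d + \<kappa> *\<^sub>R e) \<le> 5/2" using nd k by linarith
    then show ?thesis unfolding dist_norm Ly by simp
  qed
  have yi: "y \<in> interior tooth"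
  proof (rule box_interior[OF cell])
    have fy: "fst y = fst u + ((fst x - fst u) + \<kappa> * (real_of_int a + 1/2 - fst u)) / 8"
      and sy: "snd y = snd u + ((snd x - snd u) + \<kappa> * (real_of_int b + 1/2 - snd u)) / 8"
      unfolding y_def v_def m_def by simp_all
    have pa: "0 \<le> \<kappa> * (fst u - real_of_int a)" "\<kappa> * (fst u - real_of_int a) \<le> (fst u - real_of_int a) / 2"
        "\<kappa> - \<kappa> * (fst u - real_of_int a) \<le> (1 - (fst u - real_of_int a)) / 2"
      using prod_facts[of "fst u - real_of_int a" \<kappa>] ub k by auto
    have pb: "0 \<le> \<kappa> * (snd u - real_of_int b)" "\<kappa> * (snd u - real_of_int b) \<le> (snd u - real_of_int b) / 2"
        "\<kappa> - \<kappa> * (snd u - real_of_int b) \<le> (1 - (snd u - real_of_int b)) / 2"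
      using prod_facts[of "snd u - real_of_int b" \<kappa>] ub k by auto
    have ea: "\<kappa> * (real_of_int a + 1/2 - fst u) = \<kappa>/2 - \<kappa> * (fst u - real_of_int a)"
      and eb: "\<kappa> * (real_of_int b + 1/2 - snd u) = \<kappa>/2 - \<kappa> * (snd u - real_of_int b)"
      by (simp_all add: algebra_simps)
    show "real_of_int a < fst y" "fst y < real_of_int a + 1" unfolding fy ea
      using box_arith[OF pa ub(1,2) xb(1,2) k(1,2)] by auto
    show "real_of_int b < snd y" "snd y < real_of_int b + 1" unfolding sy eb
      using box_arith[OF pb ub(3,4) xb(3,4) k(1,2)] by auto
  qed
  have "f y \<in> interior (f ` tooth)" by (rule iso_interior[OF iso yi])
  from perturb[OF this dy viol2 gd] show False .
qed

lemma abs1: "\<bar>e::real\<bar> = 1 \<Longrightarrow> e = 1 \<or> e = -1" by auto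

lemma sym_tooth:
  fixes e1 e2 :: real
  assumes "\<bar>e1\<bar> = 1" "\<bar>e2\<bar> = 1"
  shows "(e1 * (fst x - 1/2) + 1/2, e2 * (snd x - 1/2) + 1/2) \<in> tooth \<longleftrightarrow> x \<in> tooth"
  using abs1[OF assms(1)] abs1[OF assms(2)] unfolding tooth_iff by auto

lemma sym_tooth_swap:
  fixes e1 e2 :: real
  assumes "\<bar>e1\<bar> = 1" "\<bar>e2\<bar> = 1"
  shows "(e1 * (snd x - 1/2) + 1/2, e2 * (fst x - 1/2) + 1/2) \<in> tooth \<longleftrightarrow> x \<in> tooth"
  using abs1[OF assms(1)] abs1[OF assms(2)] unfolding tooth_iff by auto

lemma cell_h: "i \<in> {-2..2} \<Longrightarrow> unit_sq i 0 \<subseteq> tooth"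
  unfolding tooth_def by blast

lemma cell_v: "j \<in> {-2..2} \<Longrightarrow> unit_sq 0 j \<subseteq> tooth"
proof -
  assume j: "j \<in> {-2..2}"
  show ?thesis
  proof (cases "j = 0")
    case True then show ?thesis using cell_h[of 0] by simp
  next
    case False then have "j \<in> {-2,-1,1,2}" using j by auto
    then show ?thesis unfolding tooth_def by blast
  qed
qed

lemma tooth_cell:
  assumes "u \<in> tooth" obtains a b where "unit_sq a b \<subseteq> tooth" "u \<in> unit_sq a b"
proof -
  have "(\<exists>i\<in>{-2..2}. u \<in> unit_sq i 0) \<or> (\<exists>j\<in>{-2,-1,1,2}. u \<in> unit_sq 0 j)"
    using assms unfolding tooth_def by blast
  then show ?thesis
  proof
    assume "\<exists>i\<in>{-2..2}. u \<in> unit_sq i 0"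
    then obtain i where "i \<in> {-2..2}" "u \<in> unit_sq i 0" by blast
    then show ?thesis using that cell_h by blast
  next
    assume "\<exists>j\<in>{-2,-1,1,2}. u \<in> unit_sq 0 j"
    then obtain j where "j \<in> {-2,-1,1,2}" "u \<in> unit_sq 0 j" by blast
    moreover then have "j \<in> {-2..2}" by auto
    ultimately show ?thesis using that cell_v by blast
  qed
qed

lemma orth_cases:
  fixes \<alpha> \<beta> \<gamma> \<delta> :: real
  assumes "0 \<le> \<alpha>" "0 \<le> \<beta>" "0 \<le> \<gamma>" "0 \<le> \<delta>" "\<alpha>\<^sup>2 + \<beta>\<^sup>2 = 1" "\<gamma>\<^sup>2 + \<delta>\<^sup>2 = 1" "\<alpha> * \<gamma> + \<beta> * \<delta> = 0"
  shows "(\<alpha> = 1 \<and> \<beta> = 0 \<and> \<gamma> = 0 \<and> \<delta> = 1) \<or> (\<alpha> = 0 \<and> \<beta> = 1 \<and> \<gamma> = 1 \<and> \<delta> = 0)"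
proof -
  have p1: "0 \<le> \<alpha> * \<gamma>" "0 \<le> \<beta> * \<delta>" using assms by simp_all
  then have z: "\<alpha> * \<gamma> = 0" "\<beta> * \<delta> = 0" using assms(7) by linarith+
  have sq1: "x = 1" if "0 \<le> x" "x\<^sup>2 = 1" for x :: real
    using that power2_eq_1_iff[of x] by auto
  show ?thesis
  proof (cases "\<alpha> = 0")
    case True
    then have "\<beta> = 1" using sq1[of \<beta>] assms by simp
    then have "\<delta> = 0" using z by simp
    then have "\<gamma> = 1" using sq1[of \<gamma>] assms by simp
    then show ?thesis using True \<open>\<beta> = 1\<close> \<open>\<delta> = 0\<close> by simp
  next
    case False
    then have "\<gamma> = 0" using z by simp
    then have "\<delta> = 1" using sq1[of \<delta>] assms by simp
    then have "\<beta> = 0" using z by simp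
    then have "\<alpha> = 1" using sq1[of \<alpha>] assms by simp
    then show ?thesis using \<open>\<gamma> = 0\<close> \<open>\<delta> = 1\<close> \<open>\<beta> = 0\<close> by simp
  qed
qed

lemma iso_affine:
  assumes "plane_isometry f"
  obtains L where "linear L" "\<And>v w. L v \<bullet> L w = v \<bullet> w" "\<And>y. f y = f 0 + L y"
proof -
  have ot: "orthogonal_transformation (\<lambda>x. f x - f 0)" by (rule iso_ot[OF assms])
  then have "linear (\<lambda>x. f x - f 0)" "\<And>v w. (f v - f 0) \<bullet> (f w - f 0) = v \<bullet> w"
    unfolding orthogonal_transformation_def by auto
  then show ?thesis using that[of "\<lambda>x. f x - f 0"] by simp
qed

lemma sign_step:
  fixes t s1 s2 :: real and v :: "real \<times> real"
  assumes "0 < t" "0 \<le> s1 * (t * fst v)" "0 \<le> s2 * (t * snd v)"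
  shows "0 \<le> s1 * fst v" "0 \<le> s2 * snd v"
proof -
  have "0 \<le> t * (s1 * fst v)" "0 \<le> t * (s2 * snd v)" using assms(2,3) by (simp_all add: algebra_simps)
  then show "0 \<le> s1 * fst v" "0 \<le> s2 * snd v" using assms(1) by (simp_all add: zero_le_mult_iff)
qed

lemma align:
  assumes iso: "plane_isometry f" and gd: "good s1 s2 p (f ` tooth)"
    and s: "\<bar>s1\<bar> = 1" "\<bar>s2\<bar> = 1" and fu: "f u = p" and ut: "u \<in> tooth"
  shows "\<exists>c. f ` tooth = tr c"
proof -
  obtain a b where cell: "unit_sq a b \<subseteq> tooth" and uc: "u \<in> unit_sq a b"
    using tooth_cell[OF ut] by blast
  obtain L where lin: "linear L" and ip: "\<And>v w. L v \<bullet> L w = v \<bullet> w" and fL0: "\<And>y. f y = f 0 + L y"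
    using iso_affine[OF iso] by blast
  have fL: "f y - p = L (y - u)" for y
    using fL0[of y] fL0[of u] fu linear_diff[OF lin, of y u] by (simp add: algebra_simps)
  define v1 where "v1 = L (1,0)"
  define v2 where "v2 = L (0,1)"
  have Lw: "L w = fst w *\<^sub>R v1 + snd w *\<^sub>R v2" for w
  proof -
    have eqw: "fst w *\<^sub>R (1::real,0::real) + snd w *\<^sub>R (0,1) = w" by (simp add: prod_eq_iff)
    have "L (fst w *\<^sub>R (1::real,0::real) + snd w *\<^sub>R (0,1)) = fst w *\<^sub>R L (1,0) + snd w *\<^sub>R L (0,1)"
      by (simp only: linear_add[OF lin] linear_scale[OF lin])
    then show ?thesis unfolding eqw v1_def v2_def .
  qed
  have key: "0 \<le> s1 * fst (L (x - u)) \<and> 0 \<le> s2 * snd (L (x - u))" if "x \<in> unit_sq a b" for x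
  proof -
    have a: "inW s1 s2 p (f x)" by (rule core[OF iso gd s fu cell uc that])
    have "fst (L (x - u)) = fst (f x) - fst p" "snd (L (x - u)) = snd (f x) - snd p"
      using fL[of x] by (metis fst_diff snd_diff)+
    then show ?thesis using a unfolding inW_def by simp
  qed
  have ub: "real_of_int a \<le> fst u" "fst u \<le> real_of_int a + 1" "real_of_int b \<le> snd u" "snd u \<le> real_of_int b + 1"
    using uc unfolding unit_sq_def by (auto simp: mem_Times_iff)
  obtain \<sigma>1 where sg1: "\<bar>\<sigma>1\<bar> = 1" "0 \<le> s1 * (\<sigma>1 * fst v1)" "0 \<le> s2 * (\<sigma>1 * snd v1)"
  proof (cases "fst u < real_of_int a + 1")
    case True
    let ?x = "(real_of_int a + 1, snd u)"
    have "?x \<in> unit_sq a b" using ub unfolding unit_sq_def by auto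
    from key[OF this] have "0 \<le> s1 * ((real_of_int a + 1 - fst u) * fst v1)" "0 \<le> s2 * ((real_of_int a + 1 - fst u) * snd v1)"
      unfolding Lw by auto
    from sign_step[OF _ this] True have "0 \<le> s1 * fst v1" "0 \<le> s2 * snd v1" by auto
    then show ?thesis using that[of 1] by simp
  next
    case False
    let ?x = "(real_of_int a, snd u)"
    have xin: "?x \<in> unit_sq a b" using ub unfolding unit_sq_def by auto
    have fu1: "fst u = real_of_int a + 1" using False ub by linarith
    from key[OF xin] fu1 have "0 \<le> s1 * (-1 * fst v1)" "0 \<le> s2 * (-1 * snd v1)"
      unfolding Lw by auto
    then show ?thesis using that[of "-1"] by simp
  qed
  obtain \<sigma>2 where sg2: "\<bar>\<sigma>2\<bar> = 1" "0 \<le> s1 * (\<sigma>2 * fst v2)" "0 \<le> s2 * (\<sigma>2 * snd v2)"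
  proof (cases "snd u < real_of_int b + 1")
    case True
    let ?x = "(fst u, real_of_int b + 1)"
    have "?x \<in> unit_sq a b" using ub unfolding unit_sq_def by auto
    from key[OF this] have "0 \<le> s1 * ((real_of_int b + 1 - snd u) * fst v2)" "0 \<le> s2 * ((real_of_int b + 1 - snd u) * snd v2)"
      unfolding Lw by auto
    from sign_step[OF _ this] True have "0 \<le> s1 * fst v2" "0 \<le> s2 * snd v2" by auto
    then show ?thesis using that[of 1] by simp
  next
    case False
    let ?x = "(fst u, real_of_int b)"
    have xin: "?x \<in> unit_sq a b" using ub unfolding unit_sq_def by auto
    have fu1: "snd u = real_of_int b + 1" using False ub by linarith
    from key[OF xin] fu1 have "0 \<le> s1 * (-1 * fst v2)" "0 \<le> s2 * (-1 * snd v2)"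
      unfolding Lw by auto
    then show ?thesis using that[of "-1"] by simp
  qed
  have o1: "fst v1 * fst v1 + snd v1 * snd v1 = 1" using ip[of "(1,0)" "(1,0)"]
    unfolding v1_def inner_prod_def by (simp add: inner_real_def)
  have o2: "fst v2 * fst v2 + snd v2 * snd v2 = 1" using ip[of "(0,1)" "(0,1)"]
    unfolding v2_def inner_prod_def by (simp add: inner_real_def)
  have o3: "fst v1 * fst v2 + snd v1 * snd v2 = 0" using ip[of "(1,0)" "(0,1)"]
    unfolding v1_def v2_def inner_prod_def by (simp add: inner_real_def)
  obtain e1 e2 where e: "\<bar>e1\<bar> = 1" "\<bar>e2\<bar> = 1"
    and eL: "(\<forall>w. L w = (e1 * fst w, e2 * snd w)) \<or> (\<forall>w. L w = (e1 * snd w, e2 * fst w))"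
  proof -
    have ss: "s1 * s1 = 1" "s2 * s2 = 1" "\<sigma>1 * \<sigma>1 = 1" "\<sigma>2 * \<sigma>2 = 1"
      using abs1[OF s(1)] abs1[OF s(2)] abs1[OF sg1(1)] abs1[OF sg2(1)] by auto
    have oc: "(s1 * (\<sigma>1 * fst v1) = 1 \<and> s2 * (\<sigma>1 * snd v1) = 0 \<and> s1 * (\<sigma>2 * fst v2) = 0 \<and> s2 * (\<sigma>2 * snd v2) = 1) \<or>
              (s1 * (\<sigma>1 * fst v1) = 0 \<and> s2 * (\<sigma>1 * snd v1) = 1 \<and> s1 * (\<sigma>2 * fst v2) = 1 \<and> s2 * (\<sigma>2 * snd v2) = 0)"
    proof (rule orth_cases[OF sg1(2,3) sg2(2,3)])
      show "(s1 * (\<sigma>1 * fst v1))\<^sup>2 + (s2 * (\<sigma>1 * snd v1))\<^sup>2 = 1"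
        using o1 ss by algebra
      show "(s1 * (\<sigma>2 * fst v2))\<^sup>2 + (s2 * (\<sigma>2 * snd v2))\<^sup>2 = 1"
        using o2 ss by algebra
      have "s1 * (\<sigma>1 * fst v1) * (s1 * (\<sigma>2 * fst v2)) + s2 * (\<sigma>1 * snd v1) * (s2 * (\<sigma>2 * snd v2))
            = \<sigma>1 * \<sigma>2 * (fst v1 * fst v2 + snd v1 * snd v2)"
        using ss by algebra
      then show "s1 * (\<sigma>1 * fst v1) * (s1 * (\<sigma>2 * fst v2)) + s2 * (\<sigma>1 * snd v1) * (s2 * (\<sigma>2 * snd v2)) = 0"
        using o3 by simp
    qed
    have inv: "z = s * (\<sigma> * y)" if "s * (\<sigma> * z) = y" "s * s = 1" "\<sigma> * \<sigma> = 1" for s \<sigma> y z :: real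
    proof -
      have "s * (\<sigma> * y) = (s * s) * (\<sigma> * \<sigma>) * z" unfolding that(1)[symmetric] by (simp add: ac_simps)
      then show ?thesis using that(2,3) by simp
    qed
    from oc show ?thesis
    proof
      assume h: "s1 * (\<sigma>1 * fst v1) = 1 \<and> s2 * (\<sigma>1 * snd v1) = 0 \<and> s1 * (\<sigma>2 * fst v2) = 0 \<and> s2 * (\<sigma>2 * snd v2) = 1"
      have "fst v1 = s1 * \<sigma>1" "snd v1 = 0" "fst v2 = 0" "snd v2 = s2 * \<sigma>2"
        using inv[of s1 \<sigma>1 "fst v1" 1] inv[of s2 \<sigma>1 "snd v1" 0] inv[of s1 \<sigma>2 "fst v2" 0] inv[of s2 \<sigma>2 "snd v2" 1] h ss
        by auto
      then have "\<forall>w. L w = ((s1 * \<sigma>1) * fst w, (s2 * \<sigma>2) * snd w)" unfolding Lw by (simp add: prod_eq_iff algebra_simps)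
      moreover have "\<bar>s1 * \<sigma>1\<bar> = 1" "\<bar>s2 * \<sigma>2\<bar> = 1" using s sg1(1) sg2(1) by (simp_all add: abs_mult)
      ultimately show ?thesis using that by blast
    next
      assume h: "s1 * (\<sigma>1 * fst v1) = 0 \<and> s2 * (\<sigma>1 * snd v1) = 1 \<and> s1 * (\<sigma>2 * fst v2) = 1 \<and> s2 * (\<sigma>2 * snd v2) = 0"
      have "fst v1 = 0" "snd v1 = s2 * \<sigma>1" "fst v2 = s1 * \<sigma>2" "snd v2 = 0"
        using inv[of s1 \<sigma>1 "fst v1" 0] inv[of s2 \<sigma>1 "snd v1" 1] inv[of s1 \<sigma>2 "fst v2" 1] inv[of s2 \<sigma>2 "snd v2" 0] h ss
        by auto
      then have "\<forall>w. L w = ((s1 * \<sigma>2) * snd w, (s2 * \<sigma>1) * fst w)" unfolding Lw by (simp add: prod_eq_iff algebra_simps)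
      moreover have "\<bar>s1 * \<sigma>2\<bar> = 1" "\<bar>s2 * \<sigma>1\<bar> = 1" using s sg1(1) sg2(1) by (simp_all add: abs_mult)
      ultimately show ?thesis using that by blast
    qed
  qed
  define c where "c = f (1/2,1/2) - (1/2,1/2)"
  have fc: "f y - c = L (y - (1/2,1/2)) + (1/2,1/2)" for y
    unfolding c_def using fL0[of y] fL0[of "(1/2,1/2)"] linear_diff[OF lin, of y "(1/2,1/2)"]
    by (simp add: algebra_simps)
  have kk: "f y - c \<in> tooth \<longleftrightarrow> y \<in> tooth" for y
    using eL
  proof
    assume "\<forall>w. L w = (e1 * fst w, e2 * snd w)"
    then have "L (y - (1/2,1/2)) = (e1 * fst (y - (1/2,1/2)), e2 * snd (y - (1/2,1/2)))" by blast
    then have "f y - c = (e1 * (fst y - 1/2) + 1/2, e2 * (snd y - 1/2) + 1/2)" unfolding fc by simp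
    then show ?thesis using sym_tooth[OF e] by simp
  next
    assume "\<forall>w. L w = (e1 * snd w, e2 * fst w)"
    then have "L (y - (1/2,1/2)) = (e1 * snd (y - (1/2,1/2)), e2 * fst (y - (1/2,1/2)))" by blast
    then have "f y - c = (e1 * (snd y - 1/2) + 1/2, e2 * (fst y - 1/2) + 1/2)" unfolding fc by simp
    then show ?thesis using sym_tooth_swap[OF e] by simp
  qed
  have "f ` tooth = tr c"
  proof
    show "f ` tooth \<subseteq> tr c"
    proof
      fix z assume "z \<in> f ` tooth"
      then obtain y where "y \<in> tooth" "z = f y" by blast
      then show "z \<in> tr c" using kk[of y] unfolding mem_tr by simp
    qed
    show "tr c \<subseteq> f ` tooth"
    proof
      fix z assume "z \<in> tr c"
      obtain y where y: "z = f y" using iso_surj[OF iso] by (metis surjD)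
      then have "y \<in> tooth" using kk \<open>z \<in> tr c\<close> unfolding mem_tr by simp
      then show "z \<in> f ` tooth" using y by simp
    qed
  qed
  then show ?thesis by blast
qed

lemma mem_usq: "u \<in> unit_sq a b \<longleftrightarrow> real_of_int a \<le> fst u \<and> fst u \<le> real_of_int a + 1 \<and> real_of_int b \<le> snd u \<and> snd u \<le> real_of_int b + 1"
  unfolding unit_sq_def by (cases u) auto

lemma ceil_cell:
  fixes x :: real
  assumes "-2 < x" "x \<le> 3"
  obtains i where "i \<in> {-2..2}" "real_of_int i < x" "x \<le> real_of_int i + 1"
proof -
  define i where "i = \<lceil>x\<rceil> - 1"
  have "of_int \<lceil>x\<rceil> - 1 < x" "x \<le> of_int \<lceil>x\<rceil>" using ceiling_correct[of x] by auto
  moreover have "-2 < \<lceil>x\<rceil>" using assms(1) by (simp add: less_ceiling_iff)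
  moreover have "\<lceil>x\<rceil> \<le> 3" using assms(2) by (simp add: ceiling_le_iff)
  ultimately show ?thesis using that[of i] unfolding i_def by auto
qed

lemma pos11:
  assumes t: "u \<in> tooth"
    and C: "\<And>a b. unit_sq a b \<subseteq> tooth \<Longrightarrow> u \<in> unit_sq a b \<Longrightarrow> fst u \<le> real_of_int a \<and> snd u \<le> real_of_int b"
  shows "u = (-2,0) \<or> u = (0,-2)"
proof -
  from t have "(0 \<le> snd u \<and> snd u \<le> 1 \<and> -2 \<le> fst u \<and> fst u \<le> 3) \<or>
    (0 \<le> fst u \<and> fst u \<le> 1 \<and> -2 \<le> snd u \<and> snd u \<le> 3)" unfolding tooth_iff .
  then show ?thesis
  proof
    assume h: "0 \<le> snd u \<and> snd u \<le> 1 \<and> -2 \<le> fst u \<and> fst u \<le> 3"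
    have x: "fst u = -2"
    proof (rule ccontr)
      assume "fst u \<noteq> -2"
      then have "-2 < fst u" using h by auto
      then obtain i where i: "i \<in> {-2..2}" "real_of_int i < fst u" "fst u \<le> real_of_int i + 1"
        using ceil_cell h by blast
      have "u \<in> unit_sq i 0" using i h unfolding mem_usq by auto
      then have "fst u \<le> real_of_int i" using C[OF cell_h[OF i(1)]] by blast
      then show False using i by simp
    qed
    have "u \<in> unit_sq (-2) 0" using x h unfolding mem_usq by auto
    then have "snd u \<le> 0" using C[OF cell_h[of "-2"]] by auto
    then have "snd u = 0" using h by simp
    then show ?thesis using x by (simp add: prod_eq_iff)
  next
    assume h: "0 \<le> fst u \<and> fst u \<le> 1 \<and> -2 \<le> snd u \<and> snd u \<le> 3"
    have y: "snd u = -2"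
    proof (rule ccontr)
      assume "snd u \<noteq> -2"
      then have "-2 < snd u" using h by auto
      then obtain j where j: "j \<in> {-2..2}" "real_of_int j < snd u" "snd u \<le> real_of_int j + 1"
        using ceil_cell h by blast
      have "u \<in> unit_sq 0 j" using j h unfolding mem_usq by auto
      then have "snd u \<le> real_of_int j" using C[OF cell_v[OF j(1)]] by blast
      then show False using j by simp
    qed
    have "u \<in> unit_sq 0 (-2)" using y h unfolding mem_usq by auto
    then have "fst u \<le> 0" using C[OF cell_v[of "-2"]] by auto
    then have "fst u = 0" using h by simp
    then show ?thesis using y by (simp add: prod_eq_iff)
  qed
qed

definition rho :: "real \<Rightarrow> real \<Rightarrow> real \<times> real \<Rightarrow> real \<times> real" where
  "rho s1 s2 x = (s1 * (fst x - 1/2) + 1/2, s2 * (snd x - 1/2) + 1/2)"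

lemma rho_rho: assumes "\<bar>s1\<bar> = 1" "\<bar>s2\<bar> = 1" shows "rho s1 s2 (rho s1 s2 x) = x"
  using abs1[OF assms(1)] abs1[OF assms(2)] unfolding rho_def by (auto simp: prod_eq_iff)

lemma rho_iso: assumes "\<bar>s1\<bar> = 1" "\<bar>s2\<bar> = 1" shows "plane_isometry (\<lambda>x. rho s1 s2 x + c)"
  unfolding plane_isometry_def
proof (intro allI)
  fix x y :: "real \<times> real"
  have "dist (rho s1 s2 x + c) (rho s1 s2 y + c) = dist (rho s1 s2 x) (rho s1 s2 y)"
    by (simp add: dist_norm)
  also have "\<dots> = dist x y"
    using abs1[OF assms(1)] abs1[OF assms(2)] unfolding rho_def
    by (cases x, cases y) (auto simp: dist_Pair_Pair dist_real_def abs_minus_commute power2_commute)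
  finally show "dist (rho s1 s2 x + c) (rho s1 s2 y + c) = dist x y" .
qed

lemma rho_tooth: assumes "\<bar>s1\<bar> = 1" "\<bar>s2\<bar> = 1" shows "rho s1 s2 x \<in> tooth \<longleftrightarrow> x \<in> tooth"
  unfolding rho_def using sym_tooth[OF assms] .

lemma position:
  assumes gd: "good s1 s2 p (tr c)" and pc: "p \<in> tr c" and s: "\<bar>s1\<bar> = 1" "\<bar>s2\<bar> = 1"
  shows "c = (fst p + (s1 - 1)/2 + 2 * s1, snd p + (s2 - 1)/2) \<or> c = (fst p + (s1 - 1)/2, snd p + (s2 - 1)/2 + 2 * s2)"
proof -
  define f where "f = (\<lambda>x. rho s1 s2 x + c)"
  have iso: "plane_isometry f" unfolding f_def by (rule rho_iso[OF s])
  have img: "f ` tooth = tr c"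
  proof
    show "f ` tooth \<subseteq> tr c" unfolding f_def mem_tr using rho_tooth[OF s] by (auto simp: mem_tr)
    show "tr c \<subseteq> f ` tooth"
    proof
      fix z assume "z \<in> tr c"
      then have "z - c \<in> tooth" by (simp add: mem_tr)
      then have "rho s1 s2 (z - c) \<in> tooth" using rho_tooth[OF s] by simp
      moreover have "f (rho s1 s2 (z - c)) = z" unfolding f_def rho_rho[OF s] by simp
      ultimately show "z \<in> f ` tooth" by (metis image_eqI)
    qed
  qed
  define u where "u = rho s1 s2 (p - c)"
  have fu: "f u = p" unfolding f_def u_def rho_rho[OF s] by simp
  have ut: "u \<in> tooth" unfolding u_def rho_tooth[OF s] using pc by (simp add: mem_tr)
  have gd': "good s1 s2 p (f ` tooth)" using gd img by simp
  have ss: "s1 * s1 = 1" "s2 * s2 = 1" using abs1[OF s(1)] abs1[OF s(2)] by auto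
  have C: "fst u \<le> real_of_int a \<and> snd u \<le> real_of_int b" if cell: "unit_sq a b \<subseteq> tooth" and uc: "u \<in> unit_sq a b" for a b
  proof -
    have "(real_of_int a, real_of_int b) \<in> unit_sq a b" by (simp add: mem_usq)
    from core[OF iso gd' s fu cell uc this] have "inW s1 s2 p (f (real_of_int a, real_of_int b))" .
    moreover have "fst (f (real_of_int a, real_of_int b)) - fst p = s1 * (real_of_int a - fst u)"
      "snd (f (real_of_int a, real_of_int b)) - snd p = s2 * (real_of_int b - snd u)"
      unfolding fu[symmetric] unfolding f_def rho_def by (simp_all add: algebra_simps)
    ultimately have "0 \<le> s1 * (s1 * (real_of_int a - fst u))" "0 \<le> s2 * (s2 * (real_of_int b - snd u))"
      unfolding inW_def by simp_all
    then have "0 \<le> (s1 * s1) * (real_of_int a - fst u)" "0 \<le> (s2 * s2) * (real_of_int b - snd u)"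
      by (simp_all only: mult.assoc)
    then show ?thesis using ss by simp
  qed
  have "u = (-2,0) \<or> u = (0,-2)" by (rule pos11[OF ut C])
  moreover have "c = p - rho s1 s2 u" using fu unfolding f_def by (simp add: algebra_simps)
  then have c1: "fst c = fst p - (s1 * (fst u - 1/2) + 1/2)" "snd c = snd p - (s2 * (snd u - 1/2) + 1/2)"
    unfolding rho_def by simp_all
  show ?thesis
    using \<open>u = (-2,0) \<or> u = (0,-2)\<close>
  proof
    assume "u = (-2,0)"
    then have "fst c = fst p + (s1 - 1)/2 + 2 * s1" "snd c = snd p + (s2 - 1)/2" using c1 by (simp_all add: algebra_simps) (argo+)
    then show ?thesis by (simp add: prod_eq_iff)
  next
    assume "u = (0,-2)"
    then have "fst c = fst p + (s1 - 1)/2" "snd c = snd p + (s2 - 1)/2 + 2 * s2" using c1 by (simp_all add: algebra_simps) (argo+)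
    then show ?thesis by (simp add: prod_eq_iff)
  qed
qed

lemma tile_closed: assumes "is_copy tooth A" shows "closed A"
proof -
  obtain f where f: "plane_isometry f" "A = f ` tooth" using assms unfolding is_copy_def by blast
  have "compact (f ` tooth)" by (rule compact_continuous_image[OF iso_cont[OF f(1)] compact_tooth])
  then show ?thesis using f(2) compact_imp_closed by blast
qed

lemma corner:
  fixes \<T> :: "(real \<times> real) set set"
  assumes cp: "\<forall>A\<in>\<T>. is_copy tooth A" and cv: "\<Union>\<T> = UNIV"
    and dj: "\<forall>A\<in>\<T>. \<forall>B\<in>\<T>. A \<noteq> B \<longrightarrow> interior A \<inter> interior B = {}"
    and s: "\<bar>s1\<bar> = 1" "\<bar>s2\<bar> = 1"
    and H: "\<And>z. dist z p < 1 \<Longrightarrow> fst z \<noteq> fst p \<Longrightarrow> snd z \<noteq> snd p \<Longrightarrow> \<not> inW s1 s2 p z \<Longrightarrow>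
             \<exists>K\<in>\<T>. z \<in> interior K \<and> (\<forall>y\<in>K. dist y p < 1 \<longrightarrow> \<not> (0 < s1 * (fst y - fst p) \<and> 0 < s2 * (snd y - snd p)))"
  shows "tr (fst p + (s1 - 1)/2 + 2 * s1, snd p + (s2 - 1)/2) \<in> \<T> \<or> tr (fst p + (s1 - 1)/2, snd p + (s2 - 1)/2 + 2 * s2) \<in> \<T>"
proof -
  define Wo where "Wo y \<longleftrightarrow> 0 < s1 * (fst y - fst p) \<and> 0 < s2 * (snd y - snd p)" for y
  define F where "F = {A\<in>\<T>. \<exists>y\<in>A. dist y p < 1 \<and> Wo y}"
  have "F \<subseteq> {A\<in>\<T>. \<exists>y\<in>A. dist y p < 1}" unfolding F_def by auto
  then have finF: "finite F" using loc_fin[OF cp dj, of p] finite_subset by blast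
  have clF: "closed (\<Union>F)"
    using finF by (rule closed_Union) (use cp tile_closed F_def in auto)
  have ss: "s1 * s1 = 1" "s2 * s2 = 1" using abs1[OF s(1)] abs1[OF s(2)] by auto
  have "\<forall>\<epsilon>>0. \<exists>y\<in>\<Union>F. dist y p < \<epsilon>"
  proof (intro allI impI)
    fix \<epsilon> :: real assume "\<epsilon> > 0"
    define t where "t = min \<epsilon> 1 / 4"
    have t: "0 < t" "t \<le> \<epsilon>/4" "t \<le> 1/4" unfolding t_def using \<open>\<epsilon> > 0\<close> by auto
    define q where "q = (fst p + s1 * t, snd p + s2 * t)"
    have "dist q p \<le> \<bar>s1 * t\<bar> + \<bar>s2 * t\<bar>" using dist_le_sum[of q p] unfolding q_def by simp
    also have "\<dots> = 2 * t" using s t by (simp add: abs_mult)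
    finally have dq: "dist q p < \<epsilon>" "dist q p < 1" using t by linarith+
    have "s1 * (fst q - fst p) = (s1 * s1) * t" "s2 * (snd q - snd p) = (s2 * s2) * t"
      unfolding q_def by (simp_all add: algebra_simps)
    then have Wq: "Wo q" unfolding Wo_def using ss t by simp
    have "q \<in> \<Union>\<T>" using cv by simp
    then obtain A where A: "A \<in> \<T>" "q \<in> A" by blast
    then have "A \<in> F" unfolding F_def using dq Wq by blast
    then show "\<exists>y\<in>\<Union>F. dist y p < \<epsilon>" using A dq by blast
  qed
  then have "p \<in> \<Union>F" using closed_approachable[OF clF] by blast
  then obtain T where TF: "T \<in> F" "p \<in> T" by blast
  then have TT: "T \<in> \<T>" and Ty: "\<exists>y\<in>T. dist y p < 1 \<and> Wo y" unfolding F_def by auto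
  obtain f where f: "plane_isometry f" "T = f ` tooth" using cp TT unfolding is_copy_def by blast
  have gd: "good s1 s2 p T"
    unfolding good_def
  proof (intro allI impI)
    fix z assume z: "z \<in> interior T" "dist z p < 1" "fst z \<noteq> fst p" "snd z \<noteq> snd p"
    show "inW s1 s2 p z"
    proof (rule ccontr)
      assume "\<not> inW s1 s2 p z"
      then obtain K where K: "K \<in> \<T>" "z \<in> interior K" "\<forall>y\<in>K. dist y p < 1 \<longrightarrow> \<not> Wo y"
        using H[OF z(2-4)] unfolding Wo_def by blast
      have "K \<noteq> T" using K(3) Ty by blast
      then show False using dj K TT z(1) by blast
    qed
  qed
  obtain u where u: "u \<in> tooth" "f u = p" using TF(2) f(2) by blast
  have gd': "good s1 s2 p (f ` tooth)" using gd f(2) by simp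
  obtain c where c: "f ` tooth = tr c" using align[OF f(1) gd' s u(2) u(1)] by blast
  have "c = (fst p + (s1 - 1)/2 + 2 * s1, snd p + (s2 - 1)/2) \<or> c = (fst p + (s1 - 1)/2, snd p + (s2 - 1)/2 + 2 * s2)"
    by (rule position) (use gd c f(2) TF(2) s in auto)
  then show ?thesis using TT f(2) c by auto
qed

lemma dist_box: fixes z p :: "real \<times> real" shows "dist z p < 1 \<Longrightarrow> \<bar>fst z - fst p\<bar> < 1 \<and> \<bar>snd z - snd p\<bar> < 1"
proof -
  have "\<bar>fst z - fst p\<bar> \<le> dist z p" "\<bar>snd z - snd p\<bar> \<le> dist z p"
    using dist_fst_le[of z p] dist_snd_le[of z p] by (simp_all add: dist_real_def)
  then show "dist z p < 1 \<Longrightarrow> \<bar>fst z - fst p\<bar> < 1 \<and> \<bar>snd z - snd p\<bar> < 1" by linarith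
qed

lemma Hhelp:
  assumes A1: "\<And>z. \<bar>fst z - fst p\<bar> < 1 \<Longrightarrow> \<bar>snd z - snd p\<bar> < 1 \<Longrightarrow> fst z \<noteq> fst p \<Longrightarrow> snd z \<noteq> snd p \<Longrightarrow>
        \<not> inW s1 s2 p z \<Longrightarrow> \<exists>c\<in>set cs. z - c \<in> openT"
    and A2: "\<forall>c\<in>set cs. tr c \<in> \<T>"
    and A3: "\<forall>c\<in>set cs. \<forall>y. y - c \<in> tooth \<longrightarrow> \<bar>fst y - fst p\<bar> < 1 \<longrightarrow> \<bar>snd y - snd p\<bar> < 1 \<longrightarrow>
        \<not> (0 < s1 * (fst y - fst p) \<and> 0 < s2 * (snd y - snd p))"
  shows "\<And>z. dist z p < 1 \<Longrightarrow> fst z \<noteq> fst p \<Longrightarrow> snd z \<noteq> snd p \<Longrightarrow> \<not> inW s1 s2 p z \<Longrightarrow>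
             \<exists>K\<in>\<T>. z \<in> interior K \<and> (\<forall>y\<in>K. dist y p < 1 \<longrightarrow> \<not> (0 < s1 * (fst y - fst p) \<and> 0 < s2 * (snd y - snd p)))"
proof -
  fix z assume z: "dist z p < 1" "fst z \<noteq> fst p" "snd z \<noteq> snd p" "\<not> inW s1 s2 p z"
  obtain c where c: "c \<in> set cs" "z - c \<in> openT" using A1 dist_box[OF z(1)] z(2-4) by blast
  have "z \<in> interior (tr c)" by (rule int_tr[OF c(2)])
  moreover have "\<forall>y\<in>tr c. dist y p < 1 \<longrightarrow> \<not> (0 < s1 * (fst y - fst p) \<and> 0 < s2 * (snd y - snd p))"
  proof (intro ballI impI)
    fix y assume y: "y \<in> tr c" "dist y p < 1"
    then have "y - c \<in> tooth" by (simp add: mem_tr)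
    then show "\<not> (0 < s1 * (fst y - fst p) \<and> 0 < s2 * (snd y - snd p))"
      using A3 c(1) dist_box[OF y(2)] by blast
  qed
  ultimately show "\<exists>K\<in>\<T>. z \<in> interior K \<and> (\<forall>y\<in>K. dist y p < 1 \<longrightarrow> \<not> (0 < s1 * (fst y - fst p) \<and> 0 < s2 * (snd y - snd p)))"
    using A2 c(1) by blast
qed

lemma overlap:
  assumes cp: "\<forall>A\<in>\<T>. is_copy tooth A" and dj: "\<forall>A\<in>\<T>. \<forall>B\<in>\<T>. A \<noteq> B \<longrightarrow> interior A \<inter> interior B = {}"
    and "tr c \<in> \<T>" "tr d \<in> \<T>" "c \<noteq> d" "z - c \<in> openT" "z - d \<in> openT"
  shows False
proof -
  have "tr c \<noteq> tr d" using tr_inj assms(5) by blast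
  moreover have "z \<in> interior (tr c)" "z \<in> interior (tr d)" using int_tr assms(6,7) by blast+
  ultimately show False using dj assms(3,4) by blast
qed

lemma tr0: "tr (0,0) = tooth" unfolding tr_def zero_prod_def[symmetric] by simp

lemma corner2:
  fixes \<T> :: "(real \<times> real) set set" and p1 p2 :: real
  assumes cp: "\<forall>A\<in>\<T>. is_copy tooth A" and cv: "\<Union>\<T> = UNIV"
    and dj: "\<forall>A\<in>\<T>. \<forall>B\<in>\<T>. A \<noteq> B \<longrightarrow> interior A \<inter> interior B = {}"
    and s: "\<bar>s1\<bar> = 1" "\<bar>s2\<bar> = 1"
    and A1: "\<And>z. \<bar>fst z - p1\<bar> < 1 \<Longrightarrow> \<bar>snd z - p2\<bar> < 1 \<Longrightarrow> fst z \<noteq> p1 \<Longrightarrow> snd z \<noteq> p2 \<Longrightarrow>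
        \<not> (0 \<le> s1 * (fst z - p1) \<and> 0 \<le> s2 * (snd z - p2)) \<Longrightarrow> \<exists>c\<in>set cs. z - c \<in> openT"
    and A2: "\<forall>c\<in>set cs. tr c \<in> \<T>"
    and A3: "\<forall>c\<in>set cs. \<forall>y. y - c \<in> tooth \<longrightarrow> \<bar>fst y - p1\<bar> < 1 \<longrightarrow> \<bar>snd y - p2\<bar> < 1 \<longrightarrow>
        \<not> (0 < s1 * (fst y - p1) \<and> 0 < s2 * (snd y - p2))"
  shows "tr (p1 + (s1 - 1)/2 + 2 * s1, p2 + (s2 - 1)/2) \<in> \<T> \<or> tr (p1 + (s1 - 1)/2, p2 + (s2 - 1)/2 + 2 * s2) \<in> \<T>"
proof -
  have A1': "\<exists>c\<in>set cs. z - c \<in> openT" if "\<bar>fst z - fst (p1,p2)\<bar> < 1" "\<bar>snd z - snd (p1,p2)\<bar> < 1"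
    "fst z \<noteq> fst (p1,p2)" "snd z \<noteq> snd (p1,p2)" "\<not> inW s1 s2 (p1,p2) z" for z
    using A1 that unfolding inW_def by simp
  have A3': "\<forall>c\<in>set cs. \<forall>y. y - c \<in> tooth \<longrightarrow> \<bar>fst y - fst (p1,p2)\<bar> < 1 \<longrightarrow> \<bar>snd y - snd (p1,p2)\<bar> < 1 \<longrightarrow>
        \<not> (0 < s1 * (fst y - fst (p1,p2)) \<and> 0 < s2 * (snd y - snd (p1,p2)))"
    using A3 by simp
  from corner[OF cp cv dj s Hhelp[OF A1' A2 A3']] show ?thesis by simp
qed

theorem lemma2p1:
  shows "\<not> tiles_plane tooth"
proof
  assume "tiles_plane tooth"
  from normalize[OF this] obtain \<T> where HT: "(\<forall>A\<in>\<T>. is_copy tooth A) \<and> \<Union>\<T> = UNIV \<and>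
      (\<forall>A\<in>\<T>. \<forall>B\<in>\<T>. A \<noteq> B \<longrightarrow> interior A \<inter> interior B = {}) \<and> tooth \<in> \<T>"
    by (rule exE)
  have cp: "\<forall>A\<in>\<T>. is_copy tooth A" by (fact conjunct1[OF HT])
  have cv: "\<Union>\<T> = UNIV" by (fact conjunct1[OF conjunct2[OF HT]])
  have dj: "\<forall>A\<in>\<T>. \<forall>B\<in>\<T>. A \<noteq> B \<longrightarrow> interior A \<inter> interior B = {}"
    by (fact conjunct1[OF conjunct2[OF conjunct2[OF HT]]])
  have "tooth \<in> \<T>" by (fact conjunct2[OF conjunct2[OF conjunct2[OF HT]]])
  then have t0: "tr (0,0) \<in> \<T>" by (simp add: tr0)
  note ov = overlap[OF cp dj]
  have NW: "tr (-3,1) \<in> \<T> \<or> tr (-1,3) \<in> \<T>"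
  proof -
    have "tr (0 + (-1 - 1)/2 + 2 * (-1), 1 + (1 - 1)/2) \<in> \<T> \<or> tr (0 + (-1 - 1)/2, 1 + (1 - 1)/2 + 2 * 1) \<in> \<T>"
      by (rule corner2[OF cp cv dj, of "-1" 1 0 1 "[(0,0)]"]) (auto simp: openT_def tooth_iff t0)
    then show ?thesis by simp
  qed
  have NE: "tr (3,1) \<in> \<T> \<or> tr (1,3) \<in> \<T>"
  proof -
    have "tr (1 + (1 - 1)/2 + 2 * 1, 1 + (1 - 1)/2) \<in> \<T> \<or> tr (1 + (1 - 1)/2, 1 + (1 - 1)/2 + 2 * 1) \<in> \<T>"
      by (rule corner2[OF cp cv dj, of 1 1 1 1 "[(0,0)]"]) (auto simp: openT_def tooth_iff t0)
    then show ?thesis by simp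
  qed
  have SE: "tr (3,-1) \<in> \<T> \<or> tr (1,-3) \<in> \<T>"
  proof -
    have "tr (1 + (1 - 1)/2 + 2 * 1, 0 + (-1 - 1)/2) \<in> \<T> \<or> tr (1 + (1 - 1)/2, 0 + (-1 - 1)/2 + 2 * (-1)) \<in> \<T>"
      by (rule corner2[OF cp cv dj, of 1 "-1" 1 0 "[(0,0)]"]) (auto simp: openT_def tooth_iff t0)
    then show ?thesis by simp
  qed
  have SW: "tr (-3,-1) \<in> \<T> \<or> tr (-1,-3) \<in> \<T>"
  proof -
    have "tr (0 + (-1 - 1)/2 + 2 * (-1), 0 + (-1 - 1)/2) \<in> \<T> \<or> tr (0 + (-1 - 1)/2, 0 + (-1 - 1)/2 + 2 * (-1)) \<in> \<T>"
      by (rule corner2[OF cp cv dj, of "-1" "-1" 0 0 "[(0,0)]"]) (auto simp: openT_def tooth_iff t0)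
    then show ?thesis by simp
  qed
  have c1: "\<not> (tr (-3,1) \<in> \<T> \<and> tr (-3,-1) \<in> \<T>)"
    using ov[of "(-3,1)" "(-3,-1)" "(-5/2,1/2)"] by (auto simp: openT_def)
  have c2: "\<not> (tr (-1,3) \<in> \<T> \<and> tr (1,3) \<in> \<T>)"
    using ov[of "(-1,3)" "(1,3)" "(1/2,7/2)"] by (auto simp: openT_def)
  have c3: "\<not> (tr (3,1) \<in> \<T> \<and> tr (3,-1) \<in> \<T>)"
    using ov[of "(3,1)" "(3,-1)" "(7/2,1/2)"] by (auto simp: openT_def)
  have c4: "\<not> (tr (1,-3) \<in> \<T> \<and> tr (-1,-3) \<in> \<T>)"
    using ov[of "(1,-3)" "(-1,-3)" "(1/2,-5/2)"] by (auto simp: openT_def)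
  show False
  proof (cases "tr (-1,3) \<in> \<T>")
    case True
    then have t2: "tr (3,1) \<in> \<T>" using NE c2 by blast
    have "tr (1 + (1 - 1)/2 + 2 * 1, 2 + (1 - 1)/2) \<in> \<T> \<or> tr (1 + (1 - 1)/2, 2 + (1 - 1)/2 + 2 * 1) \<in> \<T>"
      by (rule corner2[OF cp cv dj, of 1 1 1 2 "[(0,0),(3,1)]"]) (auto simp: openT_def tooth_iff t0 t2)
    then have "tr (3,2) \<in> \<T> \<or> tr (1,4) \<in> \<T>" by simp
    moreover have "\<not> (tr (3,2) \<in> \<T> \<and> tr (3,1) \<in> \<T>)"
      using ov[of "(3,2)" "(3,1)" "(7/2,3/2)"] by (auto simp: openT_def)
    moreover have "\<not> (tr (1,4) \<in> \<T> \<and> tr (-1,3) \<in> \<T>)"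
      using ov[of "(1,4)" "(-1,3)" "(3/2,7/2)"] by (auto simp: openT_def)
    ultimately show False using True t2 by blast
  next
    case False
    then have t1: "tr (-3,1) \<in> \<T>" using NW by blast
    then have "tr (-1,-3) \<in> \<T>" using SW c1 by blast
    then have "tr (3,-1) \<in> \<T>" using SE c4 by blast
    then have t2: "tr (1,3) \<in> \<T>" using NE c3 by blast
    have "tr (0 + (-1 - 1)/2 + 2 * (-1), 2 + (1 - 1)/2) \<in> \<T> \<or> tr (0 + (-1 - 1)/2, 2 + (1 - 1)/2 + 2 * 1) \<in> \<T>"
      by (rule corner2[OF cp cv dj, of "-1" 1 0 2 "[(0,0),(-3,1)]"]) (auto simp: openT_def tooth_iff t0 t1)
    then have "tr (-3,2) \<in> \<T> \<or> tr (-1,4) \<in> \<T>" by simp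
    moreover have "\<not> (tr (-3,2) \<in> \<T> \<and> tr (-3,1) \<in> \<T>)"
      using ov[of "(-3,2)" "(-3,1)" "(-5/2,3/2)"] by (auto simp: openT_def)
    moreover have "\<not> (tr (-1,4) \<in> \<T> \<and> tr (1,3) \<in> \<T>)"
      using ov[of "(-1,4)" "(1,3)" "(-1/2,7/2)"] by (auto simp: openT_def)
    ultimately show False using t1 t2 by blast
  qed
qed

end
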